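(* Let $\lambda\in(0,1)$, put $k=1/\sqrt\lambda$, and assume $D(k)\neq0$, where $D(k)=-(1-k)^2e^{-(1+k)}-(1-k)^2e^{1+k}+(1+k)^2e^{k-1}+(1+k)^2e^{1-k}-8k$. Let $(y,z,p_y,p_z)$ be any solution on $[0,1]$ of the regularized Pontryagin system $$\lambda\dot y=p_y+p_z-\lambda y,\quad \lambda\dot z=p_y+p_z,\quad \dot p_y=p_y-z+2y,\quad \dot p_z=z-y,$$ with boundary conditions $y(0)=z(0)=0$, $y(1)=0$, $z(1)=1$. Then $x:=z-y$ coincides on $[0,1]$ with the unique function of the form $a e^{t}+b e^{-t}+c e^{t/\sqrt\lambda}+d e^{-t/\sqrt\lambda}$ satisfying $x(0)=0$, $x(1)=1$, $\dot x(0)=\dot x(1)=0$. That is, the regular optimal trajectory equals the exponential-ansatz shortcut-to-adiabaticity trajectory with $k=1/\sqrt\lambda$.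
   Context: The regularized Pontryagin system is the extremal system of the optimal control problem $\dot y=v-y$, $\dot z=v$, minimize $\int_0^1[(z-y)^2+y^2+\lambda v^2]dt$, with optimal control $v_R=(p_y+p_z)/\lambda$; here $y=\dot x$, $z=u$ for the dynamics $\dot x+x=u$. *)

theory Defs
  imports "HOL-Analysis.Analysis"
begin

definition Dk :: "real \<Rightarrow> real" where
  "Dk k = - ((1 - k)^2 * exp (-(1 + k))) - (1 - k)^2 * exp (1 + k)
          + (1 + k)^2 * exp (k - 1) + (1 + k)^2 * exp (1 - k) - 8 * k"

definition ansatz :: "real \<Rightarrow> real \<Rightarrow> real \<Rightarrow> real \<Rightarrow> real \<Rightarrow> real \<Rightarrow> real" where
  "ansatz k a b c d t = a * exp t + b * exp (- t) + c * exp (k * t) + d * exp (- (k * t))"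

definition ansatz_bc :: "real \<Rightarrow> real \<Rightarrow> real \<Rightarrow> real \<Rightarrow> real \<Rightarrow> bool" where
  "ansatz_bc k a b c d \<longleftrightarrow>
     ansatz k a b c d 0 = 0 \<and> ansatz k a b c d 1 = 1 \<and>
     deriv (ansatz k a b c d) 0 = 0 \<and> deriv (ansatz k a b c d) 1 = 0"

end

theory Submission
  imports Defs
begin


lemma expsol:
  fixes f :: "real \<Rightarrow> real"
  assumes d: "\<And>t. t \<in> {0..1} \<Longrightarrow> (f has_real_derivative (r * f t)) (at t within {0..1})"
  shows "\<forall>t\<in>{0..1}. f t = f 0 * exp (r*t)"
proof -
  have "\<And>t. t\<in>{0..1} \<Longrightarrow> ((\<lambda>t. f t * exp (-(r*t))) has_real_derivative 0) (at t within {0..1})"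
  proof -
    fix t :: real assume t: "t \<in> {0..1}"
    have "((\<lambda>t. f t * exp (-(r*t))) has_real_derivative (r * f t * exp (-(r*t)) + f t * (exp (-(r*t)) * (-(r*1))))) (at t within {0..1})"
      by (auto intro!: derivative_eq_intros d[OF t])
    then show "((\<lambda>t. f t * exp (-(r*t))) has_real_derivative 0) (at t within {0..1})"
      by (simp add: algebra_simps)
  qed
  moreover have "convex {0..1::real}" by simp
  ultimately obtain c where c: "\<forall>t\<in>{0..1}. f t * exp (-(r*t)) = c"
    using has_field_derivative_zero_constant[of "{0..1::real}" "\<lambda>t. f t * exp (-(r*t))"] by blast
  show ?thesis
  proof
    fix t :: real assume t: "t \<in> {0..1}"
    have "f t * exp (-(r*t)) = f 0 * exp (-(r*0))" using c[rule_format, OF t] c[rule_format, of 0] by simp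
    then have "f t * exp (-(r*t)) * exp (r*t) = f 0 * exp (r*t)" by simp
    then show "f t = f 0 * exp (r*t)" by (simp add: mult.assoc flip: exp_add)
  qed
qed

lemma ansatz_deriv:
  "(ansatz k a b c d has_real_derivative
     (a * exp t - b * exp (-t) + c * k * exp (k*t) - d * k * exp (-(k*t)))) (at t within S)"
  unfolding ansatz_def
  by (auto intro!: derivative_eq_intros simp: algebra_simps)

lemma ansatz_bc_iff:
  "ansatz_bc k a b c d \<longleftrightarrow>
     a + b + c + d = 0 \<and> a * exp 1 + b * exp (-1) + c * exp k + d * exp (-k) = 1 \<and>
     a - b + c * k - d * k = 0 \<and>
     a * exp 1 - b * exp (-1) + c * k * exp k - d * k * exp (-k) = 0"
proof -
  have "\<And>t. deriv (ansatz k a b c d) t = a * exp t - b * exp (-t) + c * k * exp (k*t) - d * k * exp (-(k*t))"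
    using ansatz_deriv[where S=UNIV] by (rule DERIV_imp_deriv)
  then show ?thesis unfolding ansatz_bc_def by (simp add: ansatz_def)
qed

lemma uniq:
  assumes D: "Dk k \<noteq> 0" and A: "ansatz_bc k a b c d" and B: "ansatz_bc k a' b' c' d'"
  shows "a = a' \<and> b = b' \<and> c = c' \<and> d = d'"
proof -
  define e where "e = exp (1::real)"
  define ei where "ei = exp (-1::real)"
  define E where "E = exp k"
  define Ei where "Ei = exp (-k)"
  have eei: "e * ei = 1" unfolding e_def ei_def by (simp flip: exp_add)
  have EEi: "E * Ei = 1" unfolding E_def Ei_def by (simp flip: exp_add)
  have Dk: "Dk k = - ((1 - k)^2 * ei * Ei) - (1 - k)^2 * e * E + (1 + k)^2 * E * ei + (1 + k)^2 * e * Ei - 8 * k"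
    unfolding Dk_def e_def ei_def E_def Ei_def
    by (simp add: exp_add exp_diff exp_minus field_simps)
  define p where "p = a - a'"
  define q where "q = b - b'"
  define r where "r = c - c'"
  define s where "s = d - d'"
  have e1: "p + q + r + s = 0" and e2: "p - q + k * r - k * s = 0"
   and e3: "p * e + q * ei + r * E + s * Ei = 0" and e4: "p * e - q * ei + k * r * E - k * s * Ei = 0"
    using A B unfolding ansatz_bc_iff p_def q_def r_def s_def e_def ei_def E_def Ei_def
    by (auto simp: algebra_simps)
  define M11 where "M11 = (1+k)*e + (1-k)*ei - 2*E"
  define M12 where "M12 = (1-k)*e + (1+k)*ei - 2*Ei"
  define M21 where "M21 = (1+k)*e - (1-k)*ei - 2*k*E"
  define M22 where "M22 = (1-k)*e - (1+k)*ei + 2*k*Ei"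
  have f1: "r * M11 + s * M12 = 0" unfolding M11_def M12_def using e1 e2 e3 by algebra
  have f2: "r * M21 + s * M22 = 0" unfolding M21_def M22_def using e1 e2 e4 by algebra
  have det: "M11 * M22 - M12 * M21 = 2 * Dk k"
    unfolding Dk M11_def M12_def M21_def M22_def using eei EEi by algebra
  have "(M11 * M22 - M12 * M21) * r = M22 * (r * M11 + s * M12) - M12 * (r * M21 + s * M22)"
    by algebra
  with f1 f2 det D have r0: "r = 0" by simp
  have "(M11 * M22 - M12 * M21) * s = M11 * (r * M21 + s * M22) - M21 * (r * M11 + s * M12)"
    by algebra
  with f1 f2 det D have s0: "s = 0" by simp
  from e1 e2 r0 s0 have "p = 0" "q = 0" by auto
  with r0 s0 show ?thesis unfolding p_def q_def r_def s_def by simp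
qed


lemma xcomb_lemma:
  fixes k y z py pz mu ki :: real
  assumes "mu * (k^2 - 1) = k^2" "k * ki = 1"
  shows "z - y = (-mu/2) * (y - z + py) + (-mu/2) * ((1 - 2*ki^2) * y - z + py + 2 * pz)
     + (mu*ki/2) * (y - ki * z + k * py + (k - 1) * pz) + (-mu*ki/2) * (y + ki * z - k * py - (k + 1) * pz)"
  using assms by algebra

theorem mainTheorem6:
  fixes lam :: real and y z py pz y' z' py' pz' :: "real \<Rightarrow> real"
  assumes lam: "0 < lam" "lam < 1"
    and D: "Dk (1 / sqrt lam) \<noteq> 0"
    and dy: "\<And>t. t \<in> {0..1} \<Longrightarrow> (y has_real_derivative y' t) (at t within {0..1})"
    and dz: "\<And>t. t \<in> {0..1} \<Longrightarrow> (z has_real_derivative z' t) (at t within {0..1})"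
    and dpy: "\<And>t. t \<in> {0..1} \<Longrightarrow> (py has_real_derivative py' t) (at t within {0..1})"
    and dpz: "\<And>t. t \<in> {0..1} \<Longrightarrow> (pz has_real_derivative pz' t) (at t within {0..1})"
    and ode1: "\<And>t. t \<in> {0..1} \<Longrightarrow> lam * y' t = py t + pz t - lam * y t"
    and ode2: "\<And>t. t \<in> {0..1} \<Longrightarrow> lam * z' t = py t + pz t"
    and ode3: "\<And>t. t \<in> {0..1} \<Longrightarrow> py' t = py t - z t + 2 * y t"
    and ode4: "\<And>t. t \<in> {0..1} \<Longrightarrow> pz' t = z t - y t"
    and bc: "y 0 = 0" "z 0 = 0" "y 1 = 0" "z 1 = 1"
  shows "(\<exists>!(a, b, c, d). ansatz_bc (1 / sqrt lam) a b c d) \<and>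
         (\<forall>a b c d. ansatz_bc (1 / sqrt lam) a b c d \<longrightarrow>
            (\<forall>t\<in>{0..1}. z t - y t = ansatz (1 / sqrt lam) a b c d t))"
proof -
  define k where "k = 1 / sqrt lam"
  have sl: "0 < sqrt lam" "sqrt lam < 1" using lam by auto
  have k1: "k > 1" unfolding k_def using sl by simp
  have lamk: "lam = 1 / k^2" unfolding k_def using lam by (simp add: power_divide)
  have k2: "1 < k^2" using one_less_power[OF k1, of 2] by simp
  have kne: "k \<noteq> 0" "k^2 \<noteq> 1" using k1 k2 by linarith+
  have yd: "y' t = (py t + pz t) * k^2 - y t" if "t \<in> {0..1}" for t
    using ode1[OF that] kne unfolding lamk by (simp add: field_simps)
  have zd: "z' t = (py t + pz t) * k^2" if "t \<in> {0..1}" for t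
    using ode2[OF that] kne unfolding lamk by (simp add: field_simps)
  define f1 where "f1 t = y t - z t + py t" for t
  define f2 where "f2 t = (1 - 2*(1/k)^2) * y t - z t + py t + 2 * pz t" for t
  define f3 where "f3 t = y t - (1/k) * z t + k * py t + (k - 1) * pz t" for t
  define f4 where "f4 t = y t + (1/k) * z t - k * py t - (k + 1) * pz t" for t
  have d1: "(f1 has_real_derivative (1 * f1 t)) (at t within {0..1})" if t: "t \<in> {0..1}" for t
  proof -
    have "(f1 has_real_derivative (y' t - z' t + py' t)) (at t within {0..1})"
      unfolding f1_def[abs_def] using kne by (auto intro!: derivative_eq_intros dy dz dpy dpz t)
    moreover have "y' t - z' t + py' t = 1 * f1 t"
      unfolding f1_def yd[OF t] zd[OF t] ode3[OF t] ode4[OF t] by (simp add: field_simps)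
    ultimately show ?thesis by simp
  qed
  have d2: "(f2 has_real_derivative ((-1) * f2 t)) (at t within {0..1})" if t: "t \<in> {0..1}" for t
  proof -
    have "(f2 has_real_derivative ((1 - 2*(1/k)^2) * y' t - z' t + py' t + 2 * pz' t)) (at t within {0..1})"
      unfolding f2_def[abs_def] using kne by (auto intro!: derivative_eq_intros dy dz dpy dpz t)
    moreover have "(1 - 2*(1/k)^2) * y' t - z' t + py' t + 2 * pz' t = (-1) * f2 t"
      unfolding f2_def yd[OF t] zd[OF t] ode3[OF t] ode4[OF t] using kne by (simp add: field_simps)
    ultimately show ?thesis by simp
  qed
  have d3: "(f3 has_real_derivative (k * f3 t)) (at t within {0..1})" if t: "t \<in> {0..1}" for t
  proof -
    have "(f3 has_real_derivative (y' t - (1/k) * z' t + k * py' t + (k - 1) * pz' t)) (at t within {0..1})"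
      unfolding f3_def[abs_def] using kne by (auto intro!: derivative_eq_intros dy dz dpy dpz t)
    moreover have "y' t - (1/k) * z' t + k * py' t + (k - 1) * pz' t = k * f3 t"
      unfolding f3_def yd[OF t] zd[OF t] ode3[OF t] ode4[OF t] using kne by (simp add: field_simps power2_eq_square)
    ultimately show ?thesis by simp
  qed
  have d4: "(f4 has_real_derivative ((-k) * f4 t)) (at t within {0..1})" if t: "t \<in> {0..1}" for t
  proof -
    have "(f4 has_real_derivative (y' t + (1/k) * z' t - k * py' t - (k + 1) * pz' t)) (at t within {0..1})"
      unfolding f4_def[abs_def] using kne by (auto intro!: derivative_eq_intros dy dz dpy dpz t)
    moreover have "y' t + (1/k) * z' t - k * py' t - (k + 1) * pz' t = (-k) * f4 t"
      unfolding f4_def yd[OF t] zd[OF t] ode3[OF t] ode4[OF t] using kne by (simp add: field_simps power2_eq_square)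
    ultimately show ?thesis by simp
  qed
  have s1: "\<forall>t\<in>{0..1}. f1 t = f1 0 * exp (1*t)" by (rule expsol) (rule d1)
  have s2: "\<forall>t\<in>{0..1}. f2 t = f2 0 * exp ((-1)*t)" by (rule expsol) (rule d2)
  have s3: "\<forall>t\<in>{0..1}. f3 t = f3 0 * exp (k*t)" by (rule expsol) (rule d3)
  have s4: "\<forall>t\<in>{0..1}. f4 t = f4 0 * exp ((-k)*t)" by (rule expsol) (rule d4)
  define mu where "mu = k^2 / (k^2 - 1)"
  have mueq: "mu * (k^2 - 1) = k^2" unfolding mu_def using kne by simp
  have xcomb: "z t - y t = (-mu/2) * f1 t + (-mu/2) * f2 t + (mu*(1/k)/2) * f3 t + (-mu*(1/k)/2) * f4 t" for t
    unfolding f1_def f2_def f3_def f4_def by (rule xcomb_lemma[OF mueq]) (use kne in simp)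
  define a0 where "a0 = (-mu/2) * f1 0"
  define b0 where "b0 = (-mu/2) * f2 0"
  define c0 where "c0 = (mu*(1/k)/2) * f3 0"
  define d0 where "d0 = (-mu*(1/k)/2) * f4 0"
  have xeq: "z t - y t = ansatz k a0 b0 c0 d0 t" if t: "t \<in> {0..1}" for t
    unfolding xcomb ansatz_def a0_def b0_def c0_def d0_def
    using s1[rule_format, OF t] s2[rule_format, OF t] s3[rule_format, OF t] s4[rule_format, OF t]
    by simp
  have dx: "((\<lambda>t. z t - y t) has_real_derivative y t) (at t within {0..1})" if t: "t \<in> {0..1}" for t
  proof -
    have "((\<lambda>t. z t - y t) has_real_derivative (z' t - y' t)) (at t within {0..1})"
      by (auto intro!: derivative_eq_intros dy dz t)
    moreover have "z' t - y' t = y t" using yd[OF t] zd[OF t] by simp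
    ultimately show ?thesis by simp
  qed
  have dAy: "a0 * exp t - b0 * exp (-t) + c0 * k * exp (k*t) - d0 * k * exp (-(k*t)) = y t"
    if t: "t \<in> {0..1}" for t
  proof -
    have h1: "(ansatz k a0 b0 c0 d0 has_real_derivative y t) (at t within {0..1})"
      by (rule has_field_derivative_transform_within[OF dx[OF t] zero_less_one t]) (simp add: xeq)
    have h2: "(ansatz k a0 b0 c0 d0 has_real_derivative
        (a0 * exp t - b0 * exp (-t) + c0 * k * exp (k*t) - d0 * k * exp (-(k*t)))) (at t within {0..1})"
      by (rule ansatz_deriv)
    show ?thesis
      using vector_derivative_unique_within_closed_interval[of 0 1 t "ansatz k a0 b0 c0 d0"] h1 h2 t
      unfolding has_real_derivative_iff_has_vector_derivative cbox_interval by auto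
  qed
  have bc0: "ansatz_bc k a0 b0 c0 d0"
  proof -
    have "z 0 - y 0 = ansatz k a0 b0 c0 d0 0" by (rule xeq) simp
    then have i1: "a0 + b0 + c0 + d0 = 0" using bc by (simp add: ansatz_def)
    have "z 1 - y 1 = ansatz k a0 b0 c0 d0 1" by (rule xeq) simp
    then have i2: "a0 * exp 1 + b0 * exp (-1) + c0 * exp k + d0 * exp (-k) = 1" using bc by (simp add: ansatz_def)
    have i3: "a0 - b0 + c0 * k - d0 * k = 0" using dAy[of 0] bc by simp
    have i4: "a0 * exp 1 - b0 * exp (-1) + c0 * k * exp k - d0 * k * exp (-k) = 0" using dAy[of 1] bc by simp
    show ?thesis unfolding ansatz_bc_iff using i1 i2 i3 i4 by blast
  qed
  have main: "(\<exists>!(a, b, c, d). ansatz_bc k a b c d) \<and>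
         (\<forall>a b c d. ansatz_bc k a b c d \<longrightarrow>
            (\<forall>t\<in>{0..1}. z t - y t = ansatz k a b c d t))"
  proof
    show "\<exists>!(a, b, c, d). ansatz_bc k a b c d"
    proof (rule ex1I[of _ "(a0, b0, c0, d0)"])
      show "case (a0, b0, c0, d0) of (a, b, c, d) \<Rightarrow> ansatz_bc k a b c d" using bc0 by simp
      fix p assume "case p of (a, b, c, d) \<Rightarrow> ansatz_bc k a b c d"
      then show "p = (a0, b0, c0, d0)" using uniq[OF _ _ bc0] D unfolding k_def[symmetric]
        by (cases p) auto
    qed
    show "\<forall>a b c d. ansatz_bc k a b c d \<longrightarrow> (\<forall>t\<in>{0..1}. z t - y t = ansatz k a b c d t)"
      using uniq[OF _ _ bc0] D xeq unfolding k_def[symmetric] by blast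
  qed
  then show ?thesis unfolding k_def .
qed

end
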